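(* Consider the LSTM system $x_{k+1}=f(x_k,u_k)$, $y_k=g(x_k)$ described in the context, augmented with an output disturbance $d\in\mathbb{R}^p$ (so the output is $g(x)+d$). If $x_{k+1}=f(x_k,u_k)$ is Incrementally Input-to-State Stable ($\delta$ISS) in the sets $\mathcal{X}$ and $\mathcal{U}$, then for every $u\in\mathcal{U}$ and every $y\in\mathbb{R}^p$ there exist unique values $x^*\in\mathcal{X}$, $d^*\in\mathbb{R}^p$ such that $x^*=f(x^*,u)$ and $y=g(x^* )+d^*$.
   Context: LSTM model: states $c,h\in\mathbb{R}^n$, input $u\in\mathbb{R}^m$, output $y\in\mathbb{R}^p$, $c_{k+1}=\sigma(W_fu_k+U_fh_k+b_f)\circ c_k+\sigma(W_iu_k+U_ih_k+b_i)\circ\tanh(W_cu_k+U_ch_k+b_c)$, $h_{k+1}=\sigma(W_ou_k+U_oh_k+b_o)\circ\tanh(c_{k+1})$, $y_k=W_yh_k+b_y$, where $\sigma$ is the logistic sigmoid, activations act elementwise, $\circ$ is the elementwise product; $x=[c^\top\ h^\top]^\top$, written $x_{k+1}=f(x_k,u_k)$, $y_k=g(x_k)$. $\delta$ISS: given $\mathcal{X}\subseteq\mathbb{R}^{2n}$ positively invariant (for every $u\in\mathcal{U}$, $x\in\mathcal{X}\Rightarrow f(x,u)\in\mathcal{X}$) and $\mathcal{U}\subseteq\mathbb{R}^m$, the system is $\delta$ISS in $\mathcal{X},\mathcal{U}$ if there exist $\beta\in\mathcal{KL}$, $\gamma\in\mathcal{K}_\infty$ such that for all $k\ge0$, all $x_{a,0},x_{b,0}\in\mathcal{X}$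 and all input sequences in $\mathcal{U}$, $\|x_{a,k}-x_{b,k}\|\le\beta(\|x_{a,0}-x_{b,0}\|,k)+\gamma(\max_{0\le h<k}\|u_{a,h}-u_{b,h}\|)$.
   Formalization: The set $\mathcal{X}$ is further assumed to be nonempty and closed in $\mathbb{R}^{2n}$. The statement above fails without it. *)

theory Defs
  imports "HOL-Analysis.Analysis"
begin

record ('n::finite, 'm::finite, 'p::finite) lstm =
  Wf :: "real^'m^'n"  Uf :: "real^'n^'n"  bf :: "real^'n"
  Wi :: "real^'m^'n"  Ui :: "real^'n^'n"  bi :: "real^'n"
  Wc :: "real^'m^'n"  Uc :: "real^'n^'n"  bc :: "real^'n"
  Wo :: "real^'m^'n"  Uo :: "real^'n^'n"  bo :: "real^'n"
  Wy :: "real^'n^'p"  b_y :: "real^'p"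

definition sigmoid :: "real \<Rightarrow> real" where
  "sigmoid t = 1 / (1 + exp (- t))"

definition vsig :: "real^'n \<Rightarrow> real^'n" where
  "vsig v = (\<chi> i. sigmoid (v $ i))"

definition vtanh :: "real^'n \<Rightarrow> real^'n" where
  "vtanh v = (\<chi> i. tanh (v $ i))"

definition hadamard :: "real^'n \<Rightarrow> real^'n \<Rightarrow> real^'n" (infixl "\<circ>\<^sub>h" 70) where
  "a \<circ>\<^sub>h b = (\<chi> i. a $ i * b $ i)"

text \<open>State x = (c, h); the norm on pairs is the Euclidean norm of the stacked vector.\<close>
definition lstm_c_next :: "('n::finite,'m::finite,'p::finite) lstm \<Rightarrow> (real^'n) \<times> (real^'n) \<Rightarrow> real^'m \<Rightarrow> real^'n" where
  "lstm_c_next P x u =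
     vsig (Wf P *v u + Uf P *v snd x + bf P) \<circ>\<^sub>h fst x
   + vsig (Wi P *v u + Ui P *v snd x + bi P) \<circ>\<^sub>h vtanh (Wc P *v u + Uc P *v snd x + bc P)"

definition lstm_f :: "('n::finite,'m::finite,'p::finite) lstm \<Rightarrow> (real^'n) \<times> (real^'n) \<Rightarrow> real^'m \<Rightarrow> (real^'n) \<times> (real^'n)" where
  "lstm_f P x u =
     (lstm_c_next P x u,
      vsig (Wo P *v u + Uo P *v snd x + bo P) \<circ>\<^sub>h vtanh (lstm_c_next P x u))"

definition lstm_g :: "('n::finite,'m::finite,'p::finite) lstm \<Rightarrow> (real^'n) \<times> (real^'n) \<Rightarrow> real^'p" where
  "lstm_g P x = Wy P *v snd x + b_y P"

primrec traj :: "('n::finite,'m::finite,'p::finite) lstm \<Rightarrow> (real^'n) \<times> (real^'n) \<Rightarrow> (nat \<Rightarrow> real^'m) \<Rightarrow> nat \<Rightarrow> (real^'n) \<times> (real^'n)" where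
  "traj P x0 u 0 = x0"
| "traj P x0 u (Suc k) = lstm_f P (traj P x0 u k) (u k)"

definition classK :: "(real \<Rightarrow> real) \<Rightarrow> bool" where
  "classK \<alpha> \<longleftrightarrow> continuous_on {0..} \<alpha> \<and> strict_mono_on {0..} \<alpha> \<and> \<alpha> 0 = 0"

definition classKinf :: "(real \<Rightarrow> real) \<Rightarrow> bool" where
  "classKinf \<alpha> \<longleftrightarrow> classK \<alpha> \<and> filterlim \<alpha> at_top at_top"

definition classKL :: "(real \<Rightarrow> nat \<Rightarrow> real) \<Rightarrow> bool" where
  "classKL \<beta> \<longleftrightarrow> (\<forall>k. classK (\<lambda>r. \<beta> r k)) \<and>
     (\<forall>r\<ge>0. antimono (\<beta> r) \<and> (\<beta> r \<longlonglongrightarrow> 0))"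

definition pos_invariant :: "('n::finite,'m::finite,'p::finite) lstm \<Rightarrow> ((real^'n) \<times> (real^'n)) set \<Rightarrow> (real^'m) set \<Rightarrow> bool" where
  "pos_invariant P X U \<longleftrightarrow> (\<forall>x\<in>X. \<forall>u\<in>U. lstm_f P x u \<in> X)"

text \<open>The maximum over the empty index range (k = 0) is taken as 0; norms are nonnegative,
  so inserting 0 does not change the maximum otherwise.\<close>
definition deltaISS :: "('n::finite,'m::finite,'p::finite) lstm \<Rightarrow> ((real^'n) \<times> (real^'n)) set \<Rightarrow> (real^'m) set \<Rightarrow> bool" where
  "deltaISS P X U \<longleftrightarrow> (\<exists>\<beta> \<gamma>. classKL \<beta> \<and> classKinf \<gamma> \<and>
     (\<forall>k xa0 xb0 ua ub. xa0 \<in> X \<longrightarrow> xb0 \<in> X \<longrightarrow> (\<forall>h. ua h \<in> U) \<longrightarrow> (\<forall>h. ub h \<in> U) \<longrightarrow>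
        norm (traj P xa0 ua k - traj P xb0 ub k)
          \<le> \<beta> (norm (xa0 - xb0)) k + \<gamma> (Max (insert 0 ((\<lambda>h. norm (ua h - ub h)) ` {..<k})))))"

end

theory Submission
  imports Defs
begin

lemma sigmoid_pos: "0 < sigmoid t"
  unfolding sigmoid_def by (simp add: add_pos_pos)

lemma sigmoid_lt1: "sigmoid t < 1"
proof -
  have "0 < 1 + exp (-t)" using exp_gt_zero[of "-t"] by linarith
  thus ?thesis unfolding sigmoid_def by (simp add: divide_less_eq)
qed

lemma sigmoid_mono: "s \<le> t \<Longrightarrow> sigmoid s \<le> sigmoid t"
  unfolding sigmoid_def by (simp add: frac_le add_pos_pos)

lemma sig_den: "1 + exp (- t) \<noteq> (0::real)"
  using exp_gt_zero[of "-t"] by linarith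

lemma tendsto_sigmoid [tendsto_intros]:
  "(f \<longlongrightarrow> a) F \<Longrightarrow> ((\<lambda>n. sigmoid (f n)) \<longlongrightarrow> sigmoid a) F"
  unfolding sigmoid_def
  by (intro tendsto_intros) (auto simp: sig_den)

lemma tendsto_vsig: "(f \<longlongrightarrow> a) F \<Longrightarrow> ((\<lambda>n. vsig (f n)) \<longlongrightarrow> vsig a) F"
  unfolding vsig_def by (intro tendsto_intros tendsto_vec_nth)

lemma tendsto_vtanh: "(f \<longlongrightarrow> a) F \<Longrightarrow> ((\<lambda>n. vtanh (f n)) \<longlongrightarrow> vtanh a) F"
  unfolding vtanh_def by (intro tendsto_intros tendsto_vec_nth) auto

lemma tendsto_had: "(f \<longlongrightarrow> a) F \<Longrightarrow> (g \<longlongrightarrow> b) F \<Longrightarrow> ((\<lambda>n. f n \<circ>\<^sub>h g n) \<longlongrightarrow> a \<circ>\<^sub>h b) F"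
  unfolding hadamard_def by (intro tendsto_intros tendsto_vec_nth)

lemma tendsto_mv: fixes M :: "real^'n^'m" shows "(f \<longlongrightarrow> a) F \<Longrightarrow> ((\<lambda>n. M *v f n) \<longlongrightarrow> M *v a) F"
  by (rule bounded_linear.tendsto[OF matrix_vector_mul_bounded_linear])

lemma tendsto_lstm_f:
  assumes "(X \<longlongrightarrow> L) F"
  shows "((\<lambda>n. lstm_f P (X n) u) \<longlongrightarrow> lstm_f P L u) F"
proof -
  have s: "((\<lambda>n. snd (X n)) \<longlongrightarrow> snd L) F" "((\<lambda>n. fst (X n)) \<longlongrightarrow> fst L) F"
    using assms by (auto intro: tendsto_intros)
  have c: "((\<lambda>n. lstm_c_next P (X n) u) \<longlongrightarrow> lstm_c_next P L u) F"
    unfolding lstm_c_next_def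
    by (intro tendsto_intros tendsto_had tendsto_vsig tendsto_vtanh tendsto_mv s)
  show ?thesis unfolding lstm_f_def
    by (intro tendsto_intros tendsto_had tendsto_vsig tendsto_vtanh tendsto_mv s c)
qed

abbreviation "cst v \<equiv> (\<lambda>_::nat. v)"

lemma traj_add: "traj P x0 (cst v) (m + k) = traj P (traj P x0 (cst v) m) (cst v) k"
  by (induction k) auto

lemma traj_in: "pos_invariant P X U \<Longrightarrow> x0 \<in> X \<Longrightarrow> v \<in> U \<Longrightarrow> traj P x0 (cst v) k \<in> X"
  by (induction k) (auto simp: pos_invariant_def)

lemma h_bound: "\<bar>snd (lstm_f P x v) $ j\<bar> \<le> 1"
proof -
  have "\<bar>snd (lstm_f P x v) $ j\<bar> = \<bar>sigmoid ((Wo P *v v + Uo P *v snd x + bo P) $ j)\<bar> * \<bar>tanh (lstm_c_next P x v $ j)\<bar>"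
    by (simp add: lstm_f_def hadamard_def vsig_def vtanh_def abs_mult)
  also have "\<dots> \<le> 1 * 1"
    using sigmoid_pos sigmoid_lt1 tanh_real_bounds
    by (intro mult_mono) (auto simp: less_imp_le abs_le_iff)
  finally show ?thesis by simp
qed

lemma c_step:
  fixes P :: "('n::finite,'m::finite,'p::finite) lstm"
  shows "\<exists>s. 0 \<le> s \<and> s < 1 \<and> (\<forall>x i. (\<forall>j. \<bar>snd x $ j\<bar> \<le> 1) \<longrightarrow>
            \<bar>fst (lstm_f P x v) $ i\<bar> \<le> s * \<bar>fst x $ i\<bar> + 1)"
proof -
  obtain K where K: "\<And>h. norm (Uf P *v h) \<le> norm h * K" "K > 0"
    using bounded_linear.pos_bounded[OF matrix_vector_mul_bounded_linear[of "Uf P"]] by blast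
  define A where "A = norm (Wf P *v v) + real CARD('n) * K + norm (bf P)"
  define s where "s = sigmoid A"
  have "\<bar>fst (lstm_f P x v) $ i\<bar> \<le> s * \<bar>fst x $ i\<bar> + 1" if hb: "\<forall>j. \<bar>snd x $ j\<bar> \<le> 1" for x i
  proof -
    define a where "a = Wf P *v v + Uf P *v snd x + bf P"
    have nh: "norm (snd x) \<le> real CARD('n)"
    proof -
      have "norm (snd x) \<le> (\<Sum>j\<in>UNIV. \<bar>snd x $ j\<bar>)" by (rule norm_le_l1_cart)
      also have "\<dots> \<le> (\<Sum>j\<in>(UNIV::'n set). 1)" by (intro sum_mono) (use hb in auto)
      finally show ?thesis by simp
    qed
    have "a $ i \<le> norm a" using component_le_norm_cart[of a i] by simp
    also have "norm a \<le> norm (Wf P *v v) + norm (Uf P *v snd x) + norm (bf P)"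
      unfolding a_def by (meson norm_triangle_le order_refl add_mono)
    also have "norm (Uf P *v snd x) \<le> real CARD('n) * K"
      using K(1)[of "snd x"] nh K(2) by (smt (verit) mult_right_mono mult.commute)
    finally have "a $ i \<le> A" unfolding A_def by simp
    hence sa: "sigmoid (a $ i) \<le> s" unfolding s_def by (rule sigmoid_mono)
    define b where "b = sigmoid ((Wi P *v v + Ui P *v snd x + bi P) $ i)"
    define t where "t = tanh ((Wc P *v v + Uc P *v snd x + bc P) $ i)"
    have eq: "fst (lstm_f P x v) $ i = sigmoid (a $ i) * fst x $ i + b * t"
      by (simp add: lstm_f_def lstm_c_next_def hadamard_def vsig_def vtanh_def a_def b_def t_def)
    have "\<bar>b * t\<bar> \<le> 1 * 1" unfolding abs_mult b_def t_def
      using sigmoid_pos sigmoid_lt1 tanh_real_bounds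
      by (intro mult_mono) (auto simp: less_imp_le abs_le_iff)
    moreover have "\<bar>sigmoid (a $ i) * fst x $ i\<bar> \<le> s * \<bar>fst x $ i\<bar>"
      unfolding abs_mult using sigmoid_pos[of "a $ i"] sa by (intro mult_right_mono) auto
    ultimately show ?thesis unfolding eq by (smt (verit) abs_triangle_ineq)
  qed
  moreover have "0 \<le> s" "s < 1" unfolding s_def using sigmoid_pos sigmoid_lt1 less_imp_le by auto
  ultimately show ?thesis by blast
qed

lemma traj_bounded:
  fixes P :: "('n::finite,'m::finite,'p::finite) lstm"
  shows "\<exists>B. \<forall>k. norm (traj P x0 (cst v) k) \<le> B"
proof -
  obtain s where s: "0 \<le> s" "s < 1" and st: "\<And>x i. (\<forall>j. \<bar>snd x $ j\<bar> \<le> 1) \<Longrightarrow>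
            \<bar>fst (lstm_f P x v) $ i\<bar> \<le> s * \<bar>fst x $ i\<bar> + 1"
    using c_step[of P v] by blast
  define x where "x = traj P x0 (cst v)"
  define R where "R = norm (fst (x (Suc 0))) + 1 / (1 - s)"
  have hx: "\<bar>snd (x (Suc k)) $ j\<bar> \<le> 1" for k j unfolding x_def by (simp add: h_bound)
  have R1: "1 / (1 - s) \<le> R" unfolding R_def by simp
  have cx: "\<bar>fst (x (Suc k)) $ i\<bar> \<le> R" for k i
  proof (induction k arbitrary: i)
    case 0
    have "\<bar>fst (x (Suc 0)) $ i\<bar> \<le> norm (fst (x (Suc 0)))" by (rule component_le_norm_cart)
    moreover have "1 / (1 - s) \<ge> 0" using s by simp
    ultimately show ?case unfolding R_def by linarith
  next
    case (Suc k)
    have "\<bar>fst (x (Suc (Suc k))) $ i\<bar> \<le> s * \<bar>fst (x (Suc k)) $ i\<bar> + 1"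
      unfolding x_def using st hx[unfolded x_def] by simp
    also have "\<dots> \<le> s * R + 1" using Suc.IH s(1) by (simp add: mult_left_mono)
    also have "\<dots> \<le> R"
    proof -
      have "1 \<le> (1 - s) * R" using R1 s
        by (smt (verit) divide_le_eq mult.commute)
      thus ?thesis by (simp add: algebra_simps)
    qed
    finally show ?case .
  qed
  have bnd: "norm (x (Suc k)) \<le> real CARD('n) * R + real CARD('n)" for k
  proof -
    have "norm (fst (x (Suc k))) \<le> (\<Sum>j\<in>UNIV. \<bar>fst (x (Suc k)) $ j\<bar>)" by (rule norm_le_l1_cart)
    also have "\<dots> \<le> (\<Sum>j\<in>(UNIV::'n set). R)" by (intro sum_mono cx)
    finally have 1: "norm (fst (x (Suc k))) \<le> real CARD('n) * R" by simp
    have "norm (snd (x (Suc k))) \<le> (\<Sum>j\<in>UNIV. \<bar>snd (x (Suc k)) $ j\<bar>)" by (rule norm_le_l1_cart)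
    also have "\<dots> \<le> (\<Sum>j\<in>(UNIV::'n set). 1)" by (intro sum_mono hx)
    finally have 2: "norm (snd (x (Suc k))) \<le> real CARD('n)" by simp
    have "norm (x (Suc k)) \<le> norm (fst (x (Suc k))) + norm (snd (x (Suc k)))"
      using norm_Pair_le[of "fst (x (Suc k))" "snd (x (Suc k))"] by simp
    with 1 2 show ?thesis by simp
  qed
  have "norm (x k) \<le> norm x0 + (real CARD('n) * R + real CARD('n))" for k
  proof (cases k)
    case 0
    have "0 \<le> R" using R1 s by (smt (verit) divide_nonneg_nonneg)
    then show ?thesis using 0 by (simp add: x_def)
  next
    case (Suc k') then show ?thesis using bnd[of k'] by (smt (verit) norm_ge_zero)
  qed
  thus ?thesis unfolding x_def by blast
qed

theorem lemma2:
  fixes P :: "('n::finite,'m::finite,'p::finite) lstm"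
    and X :: "((real^'n) \<times> (real^'n)) set" and U :: "(real^'m) set"
  assumes "X \<noteq> {}" and "closed X"
    and "pos_invariant P X U"
    and "deltaISS P X U"
  shows "\<forall>u\<in>U. \<forall>y::real^'p. \<exists>!(xs, ds). xs \<in> X \<and> xs = lstm_f P xs u \<and> y = lstm_g P xs + ds"
proof (intro ballI allI)
  fix v y assume vU: "v \<in> U"
  obtain \<beta> \<gamma> where KL: "classKL \<beta>" and Ki: "classKinf \<gamma>" and iss:
    "\<And>k xa0 xb0 ua ub. xa0 \<in> X \<Longrightarrow> xb0 \<in> X \<Longrightarrow> (\<forall>h. ua h \<in> U) \<Longrightarrow> (\<forall>h. ub h \<in> U) \<Longrightarrow>
        norm (traj P xa0 ua k - traj P xb0 ub k)
          \<le> \<beta> (norm (xa0 - xb0)) k + \<gamma> (Max (insert 0 ((\<lambda>h. norm (ua h - ub h)) ` {..<k})))"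
    using assms(4) unfolding deltaISS_def by blast
  have g0: "\<gamma> 0 = 0" using Ki unfolding classKinf_def classK_def by blast
  have iss': "norm (traj P a (cst v) k - traj P b (cst v) k) \<le> \<beta> (norm (a - b)) k"
    if "a \<in> X" "b \<in> X" for a b k
  proof -
    have "Max (insert 0 ((\<lambda>h. norm ((cst v) h - (cst v) h)) ` {..<k})) = (0::real)"
      by (cases "k = 0") (auto simp: image_constant_conv)
    then show ?thesis using iss[OF that, of "cst v" "cst v" k] vU g0 by simp
  qed
  have bmono: "\<beta> r k \<le> \<beta> r' k" if "0 \<le> r" "r \<le> r'" for r r' k
  proof -
    have sm: "strict_mono_on {0..} (\<lambda>r. \<beta> r k)" using KL unfolding classKL_def classK_def by blast
    show ?thesis by (rule strict_mono_on_leD[OF sm]) (use that in auto)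
  qed
  have banti: "antimono (\<beta> r)" and blim: "\<beta> r \<longlonglongrightarrow> 0" if "0 \<le> r" for r
    using KL that unfolding classKL_def by auto
  have uniq: "a = b" if "a \<in> X" "b \<in> X" "a = lstm_f P a v" "b = lstm_f P b v" for a b
  proof -
    have ta: "traj P a (cst v) k = a" for k by (induction k) (use that in auto)
    have tb: "traj P b (cst v) k = b" for k by (induction k) (use that in auto)
    have "norm (a - b) \<le> \<beta> (norm (a - b)) k" for k
      using iss'[OF that(1,2), of k] ta tb by simp
    hence "norm (a - b) \<le> 0"
      using LIMSEQ_le_const[OF blim[OF norm_ge_zero[of "a - b"]], of "norm (a - b)"] by blast
    thus ?thesis by simp
  qed
  obtain x0 where x0: "x0 \<in> X" using assms(1) by blast
  define x where "x = traj P x0 (cst v)"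
  have xX: "x k \<in> X" for k unfolding x_def using traj_in[OF assms(3) x0 vU] .
  obtain B where B: "\<And>k. norm (x k) \<le> B" using traj_bounded[of P x0 v] unfolding x_def by blast
  define D where "D = 2 * B"
  have D: "norm (x j - x0) \<le> D" for j
  proof -
    have "norm (x j - x0) \<le> norm (x j) + norm (x 0)" by (simp add: x_def norm_triangle_ineq4)
    thus ?thesis using B[of j] B[of 0] unfolding D_def by simp
  qed
  have D0: "0 \<le> D" using D[of 0] by (smt (verit) norm_ge_zero)
  have "Cauchy x"
  proof (rule metric_CauchyI)
    fix e :: real assume "e > 0"
    then obtain N where N: "\<beta> D N < e"
      using order_tendstoD(2)[OF blim[OF D0] \<open>e > 0\<close>] unfolding eventually_sequentially by blast
    have step: "dist (x (m + j)) (x m) < e" if "m \<ge> N" for m j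
    proof -
      have "dist (x (m + j)) (x m) = norm (traj P (x j) (cst v) m - traj P x0 (cst v) m)"
        by (simp add: x_def dist_norm traj_add add.commute[of m j])
      also have "\<dots> \<le> \<beta> (norm (x j - x0)) m" using iss'[OF xX x0] .
      also have "\<dots> \<le> \<beta> D m" using bmono D by simp
      also have "\<dots> \<le> \<beta> D N" using banti[OF D0] that by (simp add: antimonoD)
      finally show ?thesis using N by simp
    qed
    show "\<exists>M. \<forall>m\<ge>M. \<forall>n\<ge>M. dist (x m) (x n) < e"
    proof (intro exI allI impI)
      fix m n assume "N \<le> m" "N \<le> n"
      show "dist (x m) (x n) < e"
      proof (cases "m \<le> n")
        case True
        then show ?thesis using step[OF \<open>N \<le> m\<close>, of "n - m"] by (simp add: dist_commute)
      next
        case False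
        then show ?thesis using step[OF \<open>N \<le> n\<close>, of "m - n"] by simp
      qed
    qed
  qed
  then obtain L where L: "x \<longlonglongrightarrow> L" using Cauchy_convergent_iff convergent_def by blast
  have LX: "L \<in> X" using assms(2) xX L closed_sequentially by blast
  have "(\<lambda>k. x (Suc k)) \<longlonglongrightarrow> L" using L by (rule LIMSEQ_Suc)
  moreover have "(\<lambda>k. x (Suc k)) = (\<lambda>k. lstm_f P (x k) v)" by (simp add: x_def)
  ultimately have "(\<lambda>k. lstm_f P (x k) v) \<longlonglongrightarrow> L" by simp
  moreover have "(\<lambda>k. lstm_f P (x k) v) \<longlonglongrightarrow> lstm_f P L v" by (rule tendsto_lstm_f[OF L])
  ultimately have Lfix: "L = lstm_f P L v" using LIMSEQ_unique by blast
  show "\<exists>!(xs, ds). xs \<in> X \<and> xs = lstm_f P xs v \<and> y = lstm_g P xs + ds"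
  proof (rule ex1I[of _ "(L, y - lstm_g P L)"])
    show "case (L, y - lstm_g P L) of (xs, ds) \<Rightarrow> xs \<in> X \<and> xs = lstm_f P xs v \<and> y = lstm_g P xs + ds"
      using LX Lfix by simp
  next
    fix p assume "case p of (xs, ds) \<Rightarrow> xs \<in> X \<and> xs = lstm_f P xs v \<and> y = lstm_g P xs + ds"
    then obtain a d where p: "p = (a, d)" "a \<in> X" "a = lstm_f P a v" "y = lstm_g P a + d"
      by (cases p) auto
    have "a = L" using uniq[OF p(2) LX p(3) Lfix] .
    then show "p = (L, y - lstm_g P L)" using p by simp
  qed
qed

end
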